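(* Let $A,B$ be idempotent $\Gamma$-graded rings and ${}_AP_B$, ${}_BQ_A$ graded bimodules unital on both sides, such that there is a graded Morita context $(A,B,P,Q,\mu,\nu)$ with surjective trace maps. For every unital graded left $A$-module $U$, the map $\eta:B\cdot\mathrm{HOM}_A(P,A)\otimes_AU\to B\cdot\mathrm{HOM}_A(P,U)$ given by $\eta(g\otimes u)(p)=g(p)u$ is a graded epimorphism of degree $e$ of graded left $B$-modules whose kernel is torsion (i.e. annihilated elementwise by $B$).
   Context: $\Gamma$ is a fixed multiplicative group with identity $e$. Rings are associative $\Gamma$-graded, not necessarily unital; $A$ is idempotent if $A^2=A$; a module is unital if $AM=M$. A left-linear $f$ is graded of degree $\sigma$ if $f(M_\tau)\subseteq N_{\tau\sigma}$; $\mathrm{HOM}$ is the direct sum over degrees. $\mathrm{HOM}_A(P,N)$ is a graded left $B$-module via $(bf)(p)=f(pb)$, and $\mathrm{HOM}_A(P,A)$ is also a right $A$-module via $(fa)(p)=f(p)a$; $B\cdot H$ denotes finite sums $\sum b_ih_i$. A graded Morita context $(A,B,P,Q,\mu,\nu)$: idempotent graded rings $A,B$, graded bimodules ${}_AP_B$, ${}_BQ_A$ unital on both sides, degree-$e$ graded bimodule maps $\mu:P\otimes_BQ\to A$, $\langle p,q\rangle=\mu(p\otimes q)$, $\nu:Q\otimes_AP\to B$, $[q,p]=\nu(q\otimes p)$, with $p'[q,p]=\langle p',q\rangle p$ and $q'\langle p,q\rangle=[q',p]q$. *)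

theory Defs
  imports "HOL-Algebra.Group" "HOL-Library.Poly_Mapping"
begin

text \<open>
The grading group Gamma is a HOL-Algebra group G (multiplicative,
identity one G). Rings are (not necessarily unital) rings, modelled by the type
class ring (which has no unit).  Abelian groups underlying modules are types of
class ab_group_add; module actions are explicit functions.
\<close>

definition add_subgroup :: "'x::ab_group_add set \<Rightarrow> bool" where
  "add_subgroup S \<longleftrightarrow> 0 \<in> S \<and> (\<forall>x\<in>S. \<forall>y\<in>S. x + y \<in> S \<and> - x \<in> S)"

definition graded_group :: "('g, 'z) monoid_scheme \<Rightarrow> ('g \<Rightarrow> 'x::ab_group_add set) \<Rightarrow> bool" where
  "graded_group G XG \<longleftrightarrow>
     (\<forall>\<sigma>\<in>carrier G. add_subgroup (XG \<sigma>)) \<and>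
     (\<forall>x. \<exists>!c. (\<forall>\<sigma>. \<sigma> \<notin> carrier G \<longrightarrow> c \<sigma> = 0) \<and> (\<forall>\<sigma>\<in>carrier G. c \<sigma> \<in> XG \<sigma>) \<and>
              finite {\<sigma>. c \<sigma> \<noteq> 0} \<and> x = (\<Sum>\<sigma>\<in>{\<sigma>. c \<sigma> \<noteq> 0}. c \<sigma>))"

definition graded_ring :: "('g, 'z) monoid_scheme \<Rightarrow> ('g \<Rightarrow> 'a::ring set) \<Rightarrow> bool" where
  "graded_ring G AG \<longleftrightarrow> graded_group G AG \<and>
     (\<forall>\<sigma>\<in>carrier G. \<forall>\<tau>\<in>carrier G. \<forall>a\<in>AG \<sigma>. \<forall>a'\<in>AG \<tau>. a * a' \<in> AG (\<sigma> \<otimes>\<^bsub>G\<^esub> \<tau>))"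

definition idempotent_ring :: "'a::ring itself \<Rightarrow> bool" where
  "idempotent_ring _ \<longleftrightarrow> (\<forall>a::'a. \<exists>xs::('a \<times> 'a) list. a = sum_list (map (\<lambda>(x, y). x * y) xs))"

definition lmod :: "('r::ring \<Rightarrow> 'm::ab_group_add \<Rightarrow> 'm) \<Rightarrow> bool" where
  "lmod act \<longleftrightarrow> (\<forall>r m m'. act r (m + m') = act r m + act r m') \<and>
                 (\<forall>r r' m. act (r + r') m = act r m + act r' m) \<and>
                 (\<forall>r r' m. act (r * r') m = act r (act r' m))"

definition rmod :: "('m::ab_group_add \<Rightarrow> 'r::ring \<Rightarrow> 'm) \<Rightarrow> bool" where
  "rmod act \<longleftrightarrow> (\<forall>r m m'. act (m + m') r = act m r + act m' r) \<and>
                 (\<forall>r r' m. act m (r + r') = act m r + act m r') \<and>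
                 (\<forall>r r' m. act m (r * r') = act (act m r) r')"

definition lunital :: "('r::ring \<Rightarrow> 'm::ab_group_add \<Rightarrow> 'm) \<Rightarrow> bool" where
  "lunital act \<longleftrightarrow> (\<forall>m. \<exists>xs::('r \<times> 'm) list. m = sum_list (map (\<lambda>(r, n). act r n) xs))"

definition runital :: "('m::ab_group_add \<Rightarrow> 'r::ring \<Rightarrow> 'm) \<Rightarrow> bool" where
  "runital act \<longleftrightarrow> (\<forall>m. \<exists>xs::('m \<times> 'r) list. m = sum_list (map (\<lambda>(n, r). act n r) xs))"

definition graded_lmod ::
  "('g, 'z) monoid_scheme \<Rightarrow> ('g \<Rightarrow> 'r::ring set) \<Rightarrow> ('g \<Rightarrow> 'm::ab_group_add set) \<Rightarrow> ('r \<Rightarrow> 'm \<Rightarrow> 'm) \<Rightarrow> bool" where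
  "graded_lmod G RG MG act \<longleftrightarrow> lmod act \<and> graded_group G MG \<and>
     (\<forall>\<sigma>\<in>carrier G. \<forall>\<tau>\<in>carrier G. \<forall>r\<in>RG \<sigma>. \<forall>m\<in>MG \<tau>. act r m \<in> MG (\<sigma> \<otimes>\<^bsub>G\<^esub> \<tau>))"

definition graded_rmod ::
  "('g, 'z) monoid_scheme \<Rightarrow> ('g \<Rightarrow> 'm::ab_group_add set) \<Rightarrow> ('g \<Rightarrow> 'r::ring set) \<Rightarrow> ('m \<Rightarrow> 'r \<Rightarrow> 'm) \<Rightarrow> bool" where
  "graded_rmod G MG RG act \<longleftrightarrow> rmod act \<and> graded_group G MG \<and>
     (\<forall>\<sigma>\<in>carrier G. \<forall>\<tau>\<in>carrier G. \<forall>m\<in>MG \<tau>. \<forall>r\<in>RG \<sigma>. act m r \<in> MG (\<tau> \<otimes>\<^bsub>G\<^esub> \<sigma>))"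

definition graded_unital_bimod ::
  "('g, 'z) monoid_scheme \<Rightarrow> ('g \<Rightarrow> 'r::ring set) \<Rightarrow> ('g \<Rightarrow> 's::ring set) \<Rightarrow> ('g \<Rightarrow> 'm::ab_group_add set)
   \<Rightarrow> ('r \<Rightarrow> 'm \<Rightarrow> 'm) \<Rightarrow> ('m \<Rightarrow> 's \<Rightarrow> 'm) \<Rightarrow> bool" where
  "graded_unital_bimod G RG SG MG la ra \<longleftrightarrow>
     graded_lmod G RG MG la \<and> graded_rmod G MG SG ra \<and> lunital la \<and> runital ra \<and>
     (\<forall>r m s. ra (la r m) s = la r (ra m s))"

text \<open>A degree-e graded bimodule map P (x)_S Q \<rightarrow> R, written via its (universal)
  S-balanced biadditive description p, q \<mapsto> <p,q>.\<close>
definition graded_pairing ::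
  "('g, 'z) monoid_scheme \<Rightarrow> ('g \<Rightarrow> 'r::ring set) \<Rightarrow> ('g \<Rightarrow> 'p::ab_group_add set) \<Rightarrow> ('g \<Rightarrow> 'q::ab_group_add set)
   \<Rightarrow> ('r \<Rightarrow> 'p \<Rightarrow> 'p) \<Rightarrow> ('p \<Rightarrow> 's::ring \<Rightarrow> 'p) \<Rightarrow> ('s \<Rightarrow> 'q \<Rightarrow> 'q) \<Rightarrow> ('q \<Rightarrow> 'r \<Rightarrow> 'q)
   \<Rightarrow> ('p \<Rightarrow> 'q \<Rightarrow> 'r) \<Rightarrow> bool" where
  "graded_pairing G RG PG QG laP raP laQ raQ m \<longleftrightarrow>
     (\<forall>p p' q. m (p + p') q = m p q + m p' q) \<and>
     (\<forall>p q q'. m p (q + q') = m p q + m p q') \<and>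
     (\<forall>p s q. m (raP p s) q = m p (laQ s q)) \<and>
     (\<forall>r p q. m (laP r p) q = r * m p q) \<and>
     (\<forall>p q r. m p (raQ q r) = m p q * r) \<and>
     (\<forall>\<sigma>\<in>carrier G. \<forall>\<tau>\<in>carrier G. \<forall>p\<in>PG \<sigma>. \<forall>q\<in>QG \<tau>. m p q \<in> RG (\<sigma> \<otimes>\<^bsub>G\<^esub> \<tau>))"

definition pairing_surj :: "('p \<Rightarrow> 'q \<Rightarrow> 'r::ring) \<Rightarrow> bool" where
  "pairing_surj m \<longleftrightarrow> (\<forall>r. \<exists>xs. r = sum_list (map (\<lambda>(p, q). m p q) xs))"

definition graded_morita_context ::
  "('g, 'z) monoid_scheme \<Rightarrow> ('g \<Rightarrow> 'a::ring set) \<Rightarrow> ('g \<Rightarrow> 'b::ring set)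
   \<Rightarrow> ('g \<Rightarrow> 'p::ab_group_add set) \<Rightarrow> ('a \<Rightarrow> 'p \<Rightarrow> 'p) \<Rightarrow> ('p \<Rightarrow> 'b \<Rightarrow> 'p)
   \<Rightarrow> ('g \<Rightarrow> 'q::ab_group_add set) \<Rightarrow> ('b \<Rightarrow> 'q \<Rightarrow> 'q) \<Rightarrow> ('q \<Rightarrow> 'a \<Rightarrow> 'q)
   \<Rightarrow> ('p \<Rightarrow> 'q \<Rightarrow> 'a) \<Rightarrow> ('q \<Rightarrow> 'p \<Rightarrow> 'b) \<Rightarrow> bool" where
  "graded_morita_context G AG BG PG laP raP QG laQ raQ mu nu \<longleftrightarrow>
     graded_ring G AG \<and> graded_ring G BG \<and>
     idempotent_ring TYPE('a) \<and> idempotent_ring TYPE('b) \<and>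
     graded_unital_bimod G AG BG PG laP raP \<and>
     graded_unital_bimod G BG AG QG laQ raQ \<and>
     graded_pairing G AG PG QG laP raP laQ raQ mu \<and>
     graded_pairing G BG QG PG laQ raQ laP raP nu \<and>
     (\<forall>p' q p. raP p' (nu q p) = laP (mu p' q) p) \<and>
     (\<forall>q' p q. raQ q' (mu p q) = laQ (nu q' p) q)"

definition hom_deg ::
  "('g, 'z) monoid_scheme \<Rightarrow> ('a \<Rightarrow> 'm::ab_group_add \<Rightarrow> 'm) \<Rightarrow> ('g \<Rightarrow> 'm set)
   \<Rightarrow> ('a \<Rightarrow> 'n::ab_group_add \<Rightarrow> 'n) \<Rightarrow> ('g \<Rightarrow> 'n set) \<Rightarrow> 'g \<Rightarrow> ('m \<Rightarrow> 'n) \<Rightarrow> bool" where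
  "hom_deg G laM MG laN NG \<sigma> f \<longleftrightarrow> \<sigma> \<in> carrier G \<and>
     (\<forall>x y. f (x + y) = f x + f y) \<and> (\<forall>a x. f (laM a x) = laN a (f x)) \<and>
     (\<forall>\<tau>\<in>carrier G. \<forall>x\<in>MG \<tau>. f x \<in> NG (\<tau> \<otimes>\<^bsub>G\<^esub> \<sigma>))"

definition HOM ::
  "('g, 'z) monoid_scheme \<Rightarrow> ('a \<Rightarrow> 'm::ab_group_add \<Rightarrow> 'm) \<Rightarrow> ('g \<Rightarrow> 'm set)
   \<Rightarrow> ('a \<Rightarrow> 'n::ab_group_add \<Rightarrow> 'n) \<Rightarrow> ('g \<Rightarrow> 'n set) \<Rightarrow> ('m \<Rightarrow> 'n) set" where
  "HOM G laM MG laN NG = {f. \<exists>S h. finite S \<and> S \<subseteq> carrier G \<and>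
      (\<forall>\<sigma>\<in>S. hom_deg G laM MG laN NG \<sigma> (h \<sigma>)) \<and> f = (\<lambda>x. \<Sum>\<sigma>\<in>S. h \<sigma> x)}"

definition Bdot :: "('p \<Rightarrow> 'b \<Rightarrow> 'p) \<Rightarrow> ('p \<Rightarrow> 'n::ab_group_add) set \<Rightarrow> ('p \<Rightarrow> 'n) set" where
  "Bdot raP H = {f. \<exists>xs::('b \<times> ('p \<Rightarrow> 'n)) list. set (map snd xs) \<subseteq> H \<and>
                     f = (\<lambda>p. \<Sum>(b, h)\<leftarrow>xs. h (raP p b))}"

definition zmult :: "int \<Rightarrow> 'u::ab_group_add \<Rightarrow> 'u" where
  "zmult n u = (if 0 \<le> n then (\<Sum>i<nat n. u) else - (\<Sum>i<nat (- n). u))"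

text \<open>Tensor product M (x)_A U, for M a set of functions P \<rightarrow> A closed under the
  right A-action (f a)(p) = f(p) a, realised literally as the free abelian group
  on M \<times> U modulo the subgroup generated by the bilinearity/balancing relations.\<close>
inductive_set tensor_rel ::
  "('p \<Rightarrow> 'a::ring) set \<Rightarrow> ('a \<Rightarrow> 'u::ab_group_add \<Rightarrow> 'u) \<Rightarrow> ((('p \<Rightarrow> 'a) \<times> 'u) \<Rightarrow>\<^sub>0 int) set"
  for M laU where
  zero: "0 \<in> tensor_rel M laU"
| add: "x \<in> tensor_rel M laU \<Longrightarrow> y \<in> tensor_rel M laU \<Longrightarrow> x + y \<in> tensor_rel M laU"
| neg: "x \<in> tensor_rel M laU \<Longrightarrow> - x \<in> tensor_rel M laU"
| addl: "g \<in> M \<Longrightarrow> g' \<in> M \<Longrightarrow>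
     Poly_Mapping.single (\<lambda>p. g p + g' p, u) 1 - Poly_Mapping.single (g, u) 1
       - Poly_Mapping.single (g', u) 1 \<in> tensor_rel M laU"
| addr: "g \<in> M \<Longrightarrow>
     Poly_Mapping.single (g, u + u') 1 - Poly_Mapping.single (g, u) 1
       - Poly_Mapping.single (g, u') 1 \<in> tensor_rel M laU"
| bal: "g \<in> M \<Longrightarrow>
     Poly_Mapping.single (\<lambda>p. g p * a, u) 1 - Poly_Mapping.single (g, laU a u) 1 \<in> tensor_rel M laU"

text \<open>Formal sums supported on M \<times> U (representatives of elements of M (x)_A U).\<close>
definition tensor_free :: "('p \<Rightarrow> 'a) set \<Rightarrow> ((('p \<Rightarrow> 'a) \<times> 'u) \<Rightarrow>\<^sub>0 int) set" where
  "tensor_free M = {x. Poly_Mapping.keys x \<subseteq> M \<times> UNIV}"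

definition tensor_Bact ::
  "('p \<Rightarrow> 'b \<Rightarrow> 'p) \<Rightarrow> 'b \<Rightarrow> ((('p \<Rightarrow> 'a) \<times> 'u) \<Rightarrow>\<^sub>0 int) \<Rightarrow> ((('p \<Rightarrow> 'a) \<times> 'u) \<Rightarrow>\<^sub>0 int)" where
  "tensor_Bact raP b x = (\<Sum>k\<in>Poly_Mapping.keys x. Poly_Mapping.single (\<lambda>p. fst k (raP p b), snd k) (Poly_Mapping.lookup x k))"

definition eta ::
  "('a \<Rightarrow> 'u::ab_group_add \<Rightarrow> 'u) \<Rightarrow> ((('p \<Rightarrow> 'a) \<times> 'u) \<Rightarrow>\<^sub>0 int) \<Rightarrow> ('p \<Rightarrow> 'u)" where
  "eta laU x = (\<lambda>p. \<Sum>k\<in>Poly_Mapping.keys x. zmult (Poly_Mapping.lookup x k) (laU (fst k p) (snd k)))"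

end

theory Submission
  imports Defs
begin


lemma zmult_0[simp]: "zmult 0 u = 0" by (simp add: zmult_def)
lemma zmult_1[simp]: "zmult 1 u = u" by (simp add: zmult_def)

lemma zmult_plus1: "zmult (n+1) u = zmult n u + u"
proof (cases "0 \<le> n")
  case True
  then have "nat (n+1) = Suc (nat n)" by simp
  then show ?thesis using True by (simp add: zmult_def add.commute)
next
  case False
  then have "nat (-n) \<ge> 1" by simp
  then obtain m where m1: "nat (-n) = Suc m" by (metis Suc_le_D One_nat_def)
  then have m2: "nat (-(n+1)) = m" by linarith
  note m = m1 m2
  show ?thesis
  proof (cases "n = -1")
    case True then show ?thesis by (simp add: zmult_def)
  next
    case n1: False
    with False have "\<not> 0 \<le> n + 1" by simp
    then show ?thesis using False m by (simp add: zmult_def add.commute)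
  qed
qed

lemma zmult_add: "zmult (m+n) u = zmult m u + zmult n u"
proof (induction n rule: int_induct[where k=0])
  case base then show ?case by simp
next
  case (step1 i)
  have "zmult (m + (i+1)) u = zmult (m+i) u + u" using zmult_plus1[of "m+i"] by (simp add: add.assoc)
  then show ?case using step1 zmult_plus1[of i u] by (simp add: add.assoc)
next
  case (step2 i)
  have a: "zmult (m + i) u = zmult (m + (i - 1)) u + u" using zmult_plus1[of "m+(i-1)"] by simp
  have b: "zmult i u = zmult (i - 1) u + u" using zmult_plus1[of "i-1"] by simp
  show ?case using step2 a b by (metis add.assoc add_right_cancel)
qed

lemma zmult_uminus: "zmult (-n) u = - zmult n u"
  using zmult_add[of n "-n" u] by (simp add: eq_neg_iff_add_eq_0 add.commute)

lemma zmult_add_right: "zmult n (u+v) = zmult n u + zmult n v"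
proof (induction n rule: int_induct[where k=0])
  case base then show ?case by simp
next
  case (step1 i)
  have "zmult (i+1) (u+v) = zmult i (u+v) + (u+v)" 
      "zmult (i+1) u = zmult i u + u" "zmult (i+1) v = zmult i v + v"
    by (rule zmult_plus1)+
  then show ?case using step1 by (simp add: algebra_simps)
next
  case (step2 i)
  have "zmult i (u+v) = zmult (i - 1) (u+v) + (u+v)" 
      "zmult i u = zmult (i - 1) u + u" "zmult i v = zmult (i - 1) v + v"
    using zmult_plus1[of "i-1"] by simp_all
  then show ?case using step2 by (simp add: algebra_simps)
qed

lemma additive_zero: fixes f :: "'x::ab_group_add \<Rightarrow> 'y::ab_group_add"
  assumes "\<And>x y. f (x+y) = f x + f y" shows "f 0 = 0"
  using assms[of 0 0] by simp

lemma additive_neg: fixes f :: "'x::ab_group_add \<Rightarrow> 'y::ab_group_add"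
  assumes "\<And>x y. f (x+y) = f x + f y" shows "f (-x) = - f x"
  using assms[of x "-x"] additive_zero[OF assms] by (simp add: eq_neg_iff_add_eq_0 add.commute)

lemma additive_diff: fixes f :: "'x::ab_group_add \<Rightarrow> 'y::ab_group_add"
  assumes "\<And>x y. f (x+y) = f x + f y" shows "f (x - y) = f x - f y"
  using assms[of x "-y"] additive_neg[OF assms] by simp

lemma additive_sum: fixes f :: "'x::ab_group_add \<Rightarrow> 'y::ab_group_add"
  assumes "\<And>x y. f (x+y) = f x + f y" shows "f (\<Sum>i\<in>I. g i) = (\<Sum>i\<in>I. f (g i))"
proof (cases "finite I")
  case True then show ?thesis
    by (induction I rule: finite_induct) (simp_all add: assms additive_zero[OF assms])
qed (simp add: additive_zero[OF assms])

lemma additive_sum_list: fixes f :: "'x::ab_group_add \<Rightarrow> 'y::ab_group_add"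
  assumes "\<And>x y. f (x+y) = f x + f y" shows "f (\<Sum>x\<leftarrow>xs. g x) = (\<Sum>x\<leftarrow>xs. f (g x))"
  by (induction xs) (simp_all add: assms additive_zero[OF assms])

lemma zmult_hom: fixes f :: "'x::ab_group_add \<Rightarrow> 'y::ab_group_add"
  assumes "\<And>x y. f (x+y) = f x + f y" shows "f (zmult n u) = zmult n (f u)"
proof (induction n rule: int_induct[where k=0])
  case base then show ?case by (simp add: additive_zero[OF assms])
next
  case (step1 i) then show ?case by (simp add: zmult_plus1 assms)
next
  case (step2 i)
  have "zmult i u = zmult (i - 1) u + u" "zmult i (f u) = zmult (i - 1) (f u) + f u"
    using zmult_plus1[of "i-1"] by simp_all
  then show ?case using step2 assms by (metis add_right_cancel)
qed

lemma zmult_0_right[simp]: "zmult n 0 = 0"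
  using zmult_hom[of "\<lambda>x. x + x" n 0] by (simp add: zmult_add_right)

lemma subgroup_zero: "add_subgroup S \<Longrightarrow> 0 \<in> S" by (simp add: add_subgroup_def)
lemma subgroup_add: "add_subgroup S \<Longrightarrow> x \<in> S \<Longrightarrow> y \<in> S \<Longrightarrow> x + y \<in> S" by (simp add: add_subgroup_def)
lemma subgroup_neg: "add_subgroup S \<Longrightarrow> x \<in> S \<Longrightarrow> - x \<in> S" by (simp add: add_subgroup_def)
lemma subgroup_diff: "add_subgroup S \<Longrightarrow> x \<in> S \<Longrightarrow> y \<in> S \<Longrightarrow> x - y \<in> S"
  using subgroup_add[of S x "-y"] subgroup_neg[of S y] by simp
lemma subgroup_sum: "add_subgroup S \<Longrightarrow> (\<And>i. i \<in> I \<Longrightarrow> f i \<in> S) \<Longrightarrow> (\<Sum>i\<in>I. f i) \<in> S"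
proof (cases "finite I")
  case True
  assume "add_subgroup S" "\<And>i. i \<in> I \<Longrightarrow> f i \<in> S"
  with True show ?thesis
    by (induction I rule: finite_induct) (simp_all add: subgroup_zero subgroup_add)
qed (simp add: subgroup_zero)

lemma zmult_subgroup: assumes "add_subgroup S" "u \<in> S" shows "zmult n u \<in> S"
proof (induction n rule: int_induct[where k=0])
  case base then show ?case by (simp add: subgroup_zero assms)
next
  case (step1 i) then show ?case by (simp add: zmult_plus1 subgroup_add assms)
next
  case (step2 i)
  have "zmult (i - 1) u = zmult i u - u" using zmult_plus1[of "i-1" u] by (simp add: algebra_simps)
  then show ?case using step2 subgroup_diff assms by simp
qed

lemma sum_keys_superset:
  fixes F :: "'k \<Rightarrow> int \<Rightarrow> 'v::comm_monoid_add"
  assumes "\<And>k. F k 0 = 0" "finite S" "Poly_Mapping.keys x \<subseteq> S"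
  shows "(\<Sum>k\<in>Poly_Mapping.keys x. F k (Poly_Mapping.lookup x k)) = (\<Sum>k\<in>S. F k (Poly_Mapping.lookup x k))"
  by (rule sum.mono_neutral_left) (use assms in \<open>auto simp: in_keys_iff\<close>)

lemma sum_keys_add:
  fixes F :: "'k \<Rightarrow> int \<Rightarrow> 'v::ab_group_add"
  assumes "\<And>k m n. F k (m + n) = F k m + F k n"
  shows "(\<Sum>k\<in>Poly_Mapping.keys (x+y). F k (Poly_Mapping.lookup (x+y) k)) = (\<Sum>k\<in>Poly_Mapping.keys x. F k (Poly_Mapping.lookup x k)) + (\<Sum>k\<in>Poly_Mapping.keys y. F k (Poly_Mapping.lookup y k))"
proof -
  have z: "\<And>k. F k 0 = 0" using assms by (metis add_cancel_right_right add_0)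
  let ?S = "Poly_Mapping.keys x \<union> Poly_Mapping.keys y"
  have f: "finite ?S" by simp
  have "(\<Sum>k\<in>Poly_Mapping.keys (x+y). F k (Poly_Mapping.lookup (x+y) k)) = (\<Sum>k\<in>?S. F k (Poly_Mapping.lookup (x+y) k))"
    by (rule sum_keys_superset[of F, OF z f keys_add[of x y]])
  also have "\<dots> = (\<Sum>k\<in>?S. F k (Poly_Mapping.lookup x k)) + (\<Sum>k\<in>?S. F k (Poly_Mapping.lookup y k))"
    by (simp add: lookup_add assms sum.distrib)
  also have "\<dots> = (\<Sum>k\<in>Poly_Mapping.keys x. F k (Poly_Mapping.lookup x k)) + (\<Sum>k\<in>Poly_Mapping.keys y. F k (Poly_Mapping.lookup y k))"
    using sum_keys_superset[of F, OF z f, of x] sum_keys_superset[of F, OF z f, of y] by simp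
  finally show ?thesis .
qed

lemma sum_keys_single:
  fixes F :: "'k \<Rightarrow> int \<Rightarrow> 'v::ab_group_add"
  assumes "\<And>k m n. F k (m + n) = F k m + F k n"
  shows "(\<Sum>k'\<in>Poly_Mapping.keys (Poly_Mapping.single k n). F k' (Poly_Mapping.lookup (Poly_Mapping.single k n) k')) = F k n"
proof -
  have z: "\<And>k. F k 0 = 0" using assms by (metis add_cancel_right_right add_0)
  show ?thesis by (cases "n = 0") (simp_all add: z)
qed



lemma gg_sub: "graded_group G XG \<Longrightarrow> \<sigma> \<in> carrier G \<Longrightarrow> add_subgroup (XG \<sigma>)"
  by (simp add: graded_group_def)

lemma gg_decomp:
  assumes "graded_group G XG"
  shows "\<exists>T c. finite T \<and> T \<subseteq> carrier G \<and> (\<forall>\<tau>\<in>T. c \<tau> \<in> XG \<tau>) \<and> x = (\<Sum>\<tau>\<in>T. c \<tau>)"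
proof -
  from assms obtain c where c: "(\<forall>\<sigma>. \<sigma> \<notin> carrier G \<longrightarrow> c \<sigma> = 0)" "(\<forall>\<sigma>\<in>carrier G. c \<sigma> \<in> XG \<sigma>)"
     "finite {\<sigma>. c \<sigma> \<noteq> 0}" "x = (\<Sum>\<sigma>\<in>{\<sigma>. c \<sigma> \<noteq> 0}. c \<sigma>)"
    unfolding graded_group_def by metis
  show ?thesis
    by (rule exI[of _ "{\<sigma>. c \<sigma> \<noteq> 0}"], rule exI[of _ c]) (use c in auto)
qed

lemma lmod_addr: "lmod act \<Longrightarrow> act r (m + m') = act r m + act r m'" by (simp add: lmod_def)
lemma lmod_addl: "lmod act \<Longrightarrow> act (r + r') m = act r m + act r' m" by (simp add: lmod_def)
lemma lmod_mult: "lmod act \<Longrightarrow> act (r * r') m = act r (act r' m)" by (simp add: lmod_def)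

lemma lmod_times: "lmod ((*) :: 'a::ring \<Rightarrow> 'a \<Rightarrow> 'a)"
  by (simp add: lmod_def algebra_simps)

lemma hom_deg_zero:
  assumes "group G" "graded_group G NG" "lmod laN" "\<sigma> \<in> carrier G"
  shows "hom_deg G laM MG laN NG \<sigma> (\<lambda>x. 0)"
proof -
  have "laN a 0 = 0" for a using additive_zero[of "laN a"] lmod_addr[OF assms(3)] by blast
  moreover have "0 \<in> NG (\<tau> \<otimes>\<^bsub>G\<^esub> \<sigma>)" if "\<tau> \<in> carrier G" for \<tau>
    using gg_sub[OF assms(2)] subgroup_zero monoid.m_closed[OF group.is_monoid[OF assms(1)]] that assms(4)
    by blast
  ultimately show ?thesis using assms(4) by (simp add: hom_deg_def)
qed

lemma hom_deg_add:
  assumes "group G" "graded_group G NG" "lmod laN"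
    "hom_deg G laM MG laN NG \<sigma> f" "hom_deg G laM MG laN NG \<sigma> g"
  shows "hom_deg G laM MG laN NG \<sigma> (\<lambda>x. f x + g x)"
proof -
  have s: "\<sigma> \<in> carrier G" using assms(4) by (simp add: hom_deg_def)
  have "add_subgroup (NG (\<tau> \<otimes>\<^bsub>G\<^esub> \<sigma>))" if "\<tau> \<in> carrier G" for \<tau>
    using gg_sub[OF assms(2)] monoid.m_closed[OF group.is_monoid[OF assms(1)]] that s by blast
  with assms(4,5) show ?thesis
    by (auto simp: hom_deg_def lmod_addr[OF assms(3)] algebra_simps intro: subgroup_add)
qed

lemma hom_deg_neg:
  assumes "group G" "graded_group G NG" "lmod laN"
    "hom_deg G laM MG laN NG \<sigma> f"
  shows "hom_deg G laM MG laN NG \<sigma> (\<lambda>x. - f x)"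
proof -
  have s: "\<sigma> \<in> carrier G" using assms(4) by (simp add: hom_deg_def)
  have "add_subgroup (NG (\<tau> \<otimes>\<^bsub>G\<^esub> \<sigma>))" if "\<tau> \<in> carrier G" for \<tau>
    using gg_sub[OF assms(2)] monoid.m_closed[OF group.is_monoid[OF assms(1)]] that s by blast
  moreover have "laN a (- y) = - laN a y" for a y
    using additive_neg[of "laN a"] lmod_addr[OF assms(3)] by blast
  ultimately show ?thesis using assms(4)
    by (auto simp: hom_deg_def algebra_simps intro: subgroup_neg)
qed

lemma HOM_single: "hom_deg G laM MG laN NG \<sigma> f \<Longrightarrow> f \<in> HOM G laM MG laN NG"
  unfolding HOM_def
  by (rule CollectI, rule exI[of _ "{\<sigma>}"], rule exI[of _ "\<lambda>_. f"]) (auto simp: hom_deg_def)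

lemma HOM_zero: "(\<lambda>x. 0) \<in> HOM G laM MG laN NG"
  unfolding HOM_def by (rule CollectI, rule exI[of _ "{}"]) auto

lemma HOM_add:
  assumes "group G" "graded_group G NG" "lmod laN"
    "f \<in> HOM G laM MG laN NG" "g \<in> HOM G laM MG laN NG"
  shows "(\<lambda>x. f x + g x) \<in> HOM G laM MG laN NG"
proof -
  from assms(4) obtain S h where S: "finite S" "S \<subseteq> carrier G" "\<forall>\<sigma>\<in>S. hom_deg G laM MG laN NG \<sigma> (h \<sigma>)"
    "f = (\<lambda>x. \<Sum>\<sigma>\<in>S. h \<sigma> x)" unfolding HOM_def by auto
  from assms(5) obtain S' h' where S': "finite S'" "S' \<subseteq> carrier G" "\<forall>\<sigma>\<in>S'. hom_deg G laM MG laN NG \<sigma> (h' \<sigma>)"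
    "g = (\<lambda>x. \<Sum>\<sigma>\<in>S'. h' \<sigma> x)" unfolding HOM_def by auto
  define hh where "hh \<sigma> = (\<lambda>x. (if \<sigma> \<in> S then h \<sigma> x else 0) + (if \<sigma> \<in> S' then h' \<sigma> x else 0))" for \<sigma>
  have hd: "hom_deg G laM MG laN NG \<sigma> (hh \<sigma>)" if "\<sigma> \<in> S \<union> S'" for \<sigma>
  proof -
    have c: "\<sigma> \<in> carrier G" using that S S' by auto
    have 1: "hom_deg G laM MG laN NG \<sigma> (\<lambda>x. if \<sigma> \<in> S then h \<sigma> x else 0)"
      using S(3) hom_deg_zero[OF assms(1-3) c] by (cases "\<sigma> \<in> S") auto
    have 2: "hom_deg G laM MG laN NG \<sigma> (\<lambda>x. if \<sigma> \<in> S' then h' \<sigma> x else 0)"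
      using S'(3) hom_deg_zero[OF assms(1-3) c] by (cases "\<sigma> \<in> S'") auto
    show ?thesis unfolding hh_def by (rule hom_deg_add[OF assms(1-3) 1 2])
  qed
  have eq: "(\<lambda>x. f x + g x) = (\<lambda>x. \<Sum>\<sigma>\<in>S \<union> S'. hh \<sigma> x)"
  proof
    fix x
    have "(\<Sum>\<sigma>\<in>S \<union> S'. hh \<sigma> x) = (\<Sum>\<sigma>\<in>S \<union> S'. if \<sigma> \<in> S then h \<sigma> x else 0) + (\<Sum>\<sigma>\<in>S \<union> S'. if \<sigma> \<in> S' then h' \<sigma> x else 0)"
      unfolding hh_def by (rule sum.distrib)
    also have "\<dots> = (\<Sum>\<sigma>\<in>S. h \<sigma> x) + (\<Sum>\<sigma>\<in>S'. h' \<sigma> x)"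
    proof -
      have a: "(S \<union> S') \<inter> S = S" "(S \<union> S') \<inter> S' = S'" by blast+
      show ?thesis
        using sum.inter_restrict[of "S \<union> S'" "\<lambda>\<sigma>. h \<sigma> x" S] sum.inter_restrict[of "S \<union> S'" "\<lambda>\<sigma>. h' \<sigma> x" S'] S(1) S'(1)
        unfolding a by simp
    qed
    finally show "f x + g x = (\<Sum>\<sigma>\<in>S \<union> S'. hh \<sigma> x)" using S(4) S'(4) by simp
  qed
  show ?thesis unfolding eq HOM_def
    by (rule CollectI, rule exI[of _ "S \<union> S'"], rule exI[of _ hh]) (use S S' hd in auto)
qed

lemma HOM_neg:
  assumes "group G" "graded_group G NG" "lmod laN" "f \<in> HOM G laM MG laN NG"
  shows "(\<lambda>x. - f x) \<in> HOM G laM MG laN NG"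
proof -
  from assms(4) obtain S h where S: "finite S" "S \<subseteq> carrier G" "\<forall>\<sigma>\<in>S. hom_deg G laM MG laN NG \<sigma> (h \<sigma>)"
    "f = (\<lambda>x. \<Sum>\<sigma>\<in>S. h \<sigma> x)" unfolding HOM_def by auto
  have hn: "\<forall>\<sigma>\<in>S. hom_deg G laM MG laN NG \<sigma> (\<lambda>x. - h \<sigma> x)"
    using S(3) hom_deg_neg[OF assms(1-3)] by blast
  show ?thesis unfolding HOM_def
    by (rule CollectI, rule exI[of _ S], rule exI[of _ "\<lambda>\<sigma> x. - h \<sigma> x"])
       (use S hn in \<open>auto simp: sum_negf\<close>)
qed

lemma HOM_sum:
  assumes "group G" "graded_group G NG" "lmod laN" "finite I"
    "\<And>i. i \<in> I \<Longrightarrow> F i \<in> HOM G laM MG laN NG"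
  shows "(\<lambda>x. \<Sum>i\<in>I. F i x) \<in> HOM G laM MG laN NG"
  using assms(4,5)
proof (induction I rule: finite_induct)
  case empty then show ?case by (simp add: HOM_zero)
next
  case (insert a I)
  then show ?case using HOM_add[OF assms(1-3), where f="F a" and g="\<lambda>x. \<Sum>i\<in>I. F i x"] by simp
qed

lemma HOM_zmult:
  assumes "group G" "graded_group G NG" "lmod laN" "f \<in> HOM G laM MG laN NG"
  shows "(\<lambda>x. zmult n (f x)) \<in> HOM G laM MG laN NG"
proof (induction n rule: int_induct[where k=0])
  case base then show ?case by (simp add: HOM_zero)
next
  case (step1 i)
  then show ?case using HOM_add[OF assms(1-3) step1(2) assms(4)] by (simp add: zmult_plus1)
next
  case (step2 i)
  have zz: "zmult i v = zmult (i-1) v + v" for v using zmult_plus1[of "i-1" v] by simp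
  have e: "(\<lambda>x. zmult (i - 1) (f x)) = (\<lambda>x. zmult i (f x) + - f x)"
    by (simp add: zz)
  show ?case unfolding e by (rule HOM_add[OF assms(1-3) step2(2) HOM_neg[OF assms]])
qed

lemma HOM_additive:
  assumes "f \<in> HOM G laM MG laN NG" shows "f (x + y) = f x + f y"
proof -
  from assms obtain S h where S: "\<forall>\<sigma>\<in>S. hom_deg G laM MG laN NG \<sigma> (h \<sigma>)"
    "f = (\<lambda>x. \<Sum>\<sigma>\<in>S. h \<sigma> x)" unfolding HOM_def by auto
  then show ?thesis by (simp add: hom_deg_def sum.distrib)
qed

lemma HOM_linear:
  assumes "lmod laN" "f \<in> HOM G laM MG laN NG" shows "f (laM a x) = laN a (f x)"
proof -
  from assms obtain S h where S: "\<forall>\<sigma>\<in>S. hom_deg G laM MG laN NG \<sigma> (h \<sigma>)"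
    "f = (\<lambda>x. \<Sum>\<sigma>\<in>S. h \<sigma> x)" unfolding HOM_def by auto
  then show ?thesis
    by (simp add: hom_deg_def additive_sum[of "laN a", OF lmod_addr[OF assms(1)]])
qed

lemma Bdot_zero: "(\<lambda>p. 0) \<in> Bdot raP H"
  unfolding Bdot_def by (rule CollectI, rule exI[of _ "[]"]) auto

lemma Bdot_elem: "h \<in> H \<Longrightarrow> (\<lambda>p. h (raP p b)) \<in> Bdot raP H"
  unfolding Bdot_def by (rule CollectI, rule exI[of _ "[(b, h)]"]) auto

lemma Bdot_add: assumes "f \<in> Bdot raP H" "g \<in> Bdot raP H" shows "(\<lambda>p. f p + g p) \<in> Bdot raP H"
proof -
  from assms(1) obtain xs where xs: "set (map snd xs) \<subseteq> H" "f = (\<lambda>p. \<Sum>(b, h)\<leftarrow>xs. h (raP p b))"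
    unfolding Bdot_def by auto
  from assms(2) obtain ys where ys: "set (map snd ys) \<subseteq> H" "g = (\<lambda>p. \<Sum>(b, h)\<leftarrow>ys. h (raP p b))"
    unfolding Bdot_def by auto
  have "(\<lambda>p. f p + g p) = (\<lambda>p. \<Sum>(b, h)\<leftarrow>xs @ ys. h (raP p b))" by (simp add: xs ys)
  moreover have "set (map snd (xs @ ys)) \<subseteq> H" using xs ys by auto
  ultimately show ?thesis unfolding Bdot_def by blast
qed

lemma Bdot_sum: "finite I \<Longrightarrow> (\<And>i. i \<in> I \<Longrightarrow> F i \<in> Bdot raP H) \<Longrightarrow> (\<lambda>p. \<Sum>i\<in>I. F i p) \<in> Bdot raP H"
proof (induction I rule: finite_induct)
  case empty then show ?case by (simp add: Bdot_zero)
next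
  case (insert a I)
  then show ?case using Bdot_add[of "F a" raP H "\<lambda>p. \<Sum>i\<in>I. F i p"] by simp
qed

lemma Bdot_shift:
  assumes "rmod raP" "g \<in> Bdot raP H" shows "(\<lambda>p. g (raP p b)) \<in> Bdot raP H"
proof -
  from assms(2) obtain xs where xs: "set (map snd xs) \<subseteq> H" "g = (\<lambda>p. \<Sum>(b, h)\<leftarrow>xs. h (raP p b))"
    unfolding Bdot_def by auto
  have "(\<lambda>p. g (raP p b)) = (\<lambda>p. \<Sum>(b', h)\<leftarrow>map (\<lambda>(b', h). (b * b', h)) xs. h (raP p b'))"
    unfolding xs(2) using assms(1) by (simp add: rmod_def o_def case_prod_unfold)
  moreover have "set (map snd (map (\<lambda>(b', h). (b * b', h)) xs)) \<subseteq> H" using xs(1) by auto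
  ultimately show ?thesis unfolding Bdot_def by blast
qed

lemma Bdot_map:
  fixes \<phi> :: "'x::ab_group_add \<Rightarrow> 'y::ab_group_add"
  assumes "\<And>x y. \<phi> (x + y) = \<phi> x + \<phi> y" "\<And>h. h \<in> H \<Longrightarrow> (\<lambda>p. \<phi> (h p)) \<in> H'"
    "g \<in> Bdot raP H"
  shows "(\<lambda>p. \<phi> (g p)) \<in> Bdot raP H'"
proof -
  from assms(3) obtain xs where xs: "set (map snd xs) \<subseteq> H" "g = (\<lambda>p. \<Sum>(b, h)\<leftarrow>xs. h (raP p b))"
    unfolding Bdot_def by auto
  have "(\<lambda>p. \<phi> (g p)) = (\<lambda>p. \<Sum>(b, h)\<leftarrow>map (\<lambda>(b, h). (b, \<lambda>p. \<phi> (h p))) xs. h (raP p b))"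
    unfolding xs(2) by (simp add: additive_sum_list[OF assms(1)] o_def case_prod_unfold)
  moreover have "set (map snd (map (\<lambda>(b, h). (b, \<lambda>p. \<phi> (h p))) xs)) \<subseteq> H'" using xs(1) assms(2) by auto
  ultimately show ?thesis unfolding Bdot_def by blast
qed



locale mctx =
  fixes G :: "('g, 'z) monoid_scheme"
    and AG :: "'g \<Rightarrow> 'a::ring set" and BG :: "'g \<Rightarrow> 'b::ring set"
    and PG :: "'g \<Rightarrow> 'p::ab_group_add set" and laP :: "'a \<Rightarrow> 'p \<Rightarrow> 'p" and raP :: "'p \<Rightarrow> 'b \<Rightarrow> 'p"
    and QG :: "'g \<Rightarrow> 'q::ab_group_add set" and laQ :: "'b \<Rightarrow> 'q \<Rightarrow> 'q" and raQ :: "'q \<Rightarrow> 'a \<Rightarrow> 'q"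
    and mu :: "'p \<Rightarrow> 'q \<Rightarrow> 'a" and nu :: "'q \<Rightarrow> 'p \<Rightarrow> 'b"
    and UG :: "'g \<Rightarrow> 'u::ab_group_add set" and laU :: "'a \<Rightarrow> 'u \<Rightarrow> 'u"
  assumes grp: "group G"
    and mc: "graded_morita_context G AG BG PG laP raP QG laQ raQ mu nu"
    and smu: "pairing_surj mu" and snu: "pairing_surj nu"
    and gU: "graded_lmod G AG UG laU" and uU: "lunital laU"
begin

abbreviation "HA \<equiv> HOM G laP PG (*) AG"
abbreviation "HU \<equiv> HOM G laP PG laU UG"
abbreviation "MM \<equiv> Bdot raP HA"
abbreviation "NN \<equiv> Bdot raP HU"
abbreviation "RR \<equiv> tensor_rel MM laU"

lemma lmodP: "lmod laP" using mc by (simp add: graded_morita_context_def graded_unital_bimod_def graded_lmod_def)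
lemma rmodP: "rmod raP" using mc by (simp add: graded_morita_context_def graded_unital_bimod_def graded_rmod_def)
lemma compP: "raP (laP a p) b = laP a (raP p b)" using mc by (simp add: graded_morita_context_def graded_unital_bimod_def)
lemma lunQ: "lunital laQ" using mc by (simp add: graded_morita_context_def graded_unital_bimod_def)
lemma grQ: "graded_group G QG" using mc by (simp add: graded_morita_context_def graded_unital_bimod_def graded_lmod_def)
lemma grA: "graded_group G AG" using mc by (simp add: graded_morita_context_def graded_ring_def)
lemma grU: "graded_group G UG" using gU by (simp add: graded_lmod_def)
lemma lmodU: "lmod laU" using gU by (simp add: graded_lmod_def)
lemma gradU: "\<sigma> \<in> carrier G \<Longrightarrow> \<tau> \<in> carrier G \<Longrightarrow> a \<in> AG \<sigma> \<Longrightarrow> u \<in> UG \<tau> \<Longrightarrow> laU a u \<in> UG (\<sigma> \<otimes>\<^bsub>G\<^esub> \<tau>)"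
  using gU by (simp add: graded_lmod_def)
lemma mup: "graded_pairing G AG PG QG laP raP laQ raQ mu" using mc by (simp add: graded_morita_context_def)
lemma mu_addl: "mu (p + p') q = mu p q + mu p' q" using mup by (simp add: graded_pairing_def)
lemma mu_addr: "mu p (q + q') = mu p q + mu p q'" using mup by (simp add: graded_pairing_def)
lemma mu_bal: "mu p (laQ b q) = mu (raP p b) q" using mup by (simp add: graded_pairing_def)
lemma mu_lin: "mu (laP a p) q = a * mu p q" using mup by (simp add: graded_pairing_def)
lemma mu_grad: "\<sigma> \<in> carrier G \<Longrightarrow> \<tau> \<in> carrier G \<Longrightarrow> p \<in> PG \<sigma> \<Longrightarrow> q \<in> QG \<tau> \<Longrightarrow> mu p q \<in> AG (\<sigma> \<otimes>\<^bsub>G\<^esub> \<tau>)"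
  using mup by (simp add: graded_pairing_def)
lemma mor: "raP p' (nu q p) = laP (mu p' q) p" using mc by (simp add: graded_morita_context_def)
lemma gradA: "\<sigma> \<in> carrier G \<Longrightarrow> \<tau> \<in> carrier G \<Longrightarrow> a \<in> AG \<sigma> \<Longrightarrow> a' \<in> AG \<tau> \<Longrightarrow> a * a' \<in> AG (\<sigma> \<otimes>\<^bsub>G\<^esub> \<tau>)"
  using mc by (simp add: graded_morita_context_def graded_ring_def)

lemma raP_addl: "raP (p + p') b = raP p b + raP p' b" using rmodP by (simp add: rmod_def)
lemma raP_addr: "raP p (b + b') = raP p b + raP p b'" using rmodP by (simp add: rmod_def)
lemma raP_0: "raP p 0 = 0" using additive_zero[of "raP p"] raP_addr by blast
lemma laU_addl: "laU (a + a') u = laU a u + laU a' u" using lmodU by (simp add: lmod_def)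
lemma laU_addr: "laU a (u + u') = laU a u + laU a u'" using lmodU by (simp add: lmod_def)
lemma laU_mult: "laU (a * a') u = laU a (laU a' u)" using lmodU by (simp add: lmod_def)

lemma mclosed: "\<sigma> \<in> carrier G \<Longrightarrow> \<tau> \<in> carrier G \<Longrightarrow> \<sigma> \<otimes>\<^bsub>G\<^esub> \<tau> \<in> carrier G"
  using monoid.m_closed[OF group.is_monoid[OF grp]] by blast
lemma massoc: "\<sigma> \<in> carrier G \<Longrightarrow> \<tau> \<in> carrier G \<Longrightarrow> \<rho> \<in> carrier G \<Longrightarrow> \<sigma> \<otimes>\<^bsub>G\<^esub> \<tau> \<otimes>\<^bsub>G\<^esub> \<rho> = \<sigma> \<otimes>\<^bsub>G\<^esub> (\<tau> \<otimes>\<^bsub>G\<^esub> \<rho>)"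
  using monoid.m_assoc[OF group.is_monoid[OF grp]] by blast

lemma MM_additive: assumes "g \<in> MM" shows "g (p + p') = g p + g p'"
proof -
  obtain xs where xs: "set (map snd xs) \<subseteq> HA" "g = (\<lambda>p. \<Sum>(b, h)\<leftarrow>xs. h (raP p b))"
    using assms unfolding Bdot_def by auto
  have "set (map snd xs) \<subseteq> HA \<Longrightarrow> (\<Sum>(b, h)\<leftarrow>xs. h (raP (p + p') b)) = (\<Sum>(b, h)\<leftarrow>xs. h (raP p b)) + (\<Sum>(b, h)\<leftarrow>xs. h (raP p' b))"
    by (induction xs) (auto simp: raP_addl HOM_additive algebra_simps case_prod_unfold)
  then show ?thesis using xs by simp
qed

lemma MM_linear: assumes "g \<in> MM" shows "g (laP a p) = a * g p"
proof -
  obtain xs where xs: "set (map snd xs) \<subseteq> HA" "g = (\<lambda>p. \<Sum>(b, h)\<leftarrow>xs. h (raP p b))"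
    using assms unfolding Bdot_def by auto
  have "set (map snd xs) \<subseteq> HA \<Longrightarrow> (\<Sum>(b, h)\<leftarrow>xs. h (raP (laP a p) b)) = a * (\<Sum>(b, h)\<leftarrow>xs. h (raP p b))"
    by (induction xs) (auto simp: compP HOM_linear[OF lmod_times] algebra_simps case_prod_unfold)
  then show ?thesis using xs by simp
qed

lemma MM_shift: "g \<in> MM \<Longrightarrow> (\<lambda>p. g (raP p b)) \<in> MM"
  by (rule Bdot_shift[OF rmodP])

lemma mu_HA: "(\<lambda>p. mu p q) \<in> HA"
proof -
  obtain T c where T: "finite T" "T \<subseteq> carrier G" "\<forall>\<tau>\<in>T. c \<tau> \<in> QG \<tau>" "q = (\<Sum>\<tau>\<in>T. c \<tau>)"
    using gg_decomp[OF grQ, of q] by metis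
  have e: "(\<lambda>p. mu p q) = (\<lambda>p. \<Sum>\<tau>\<in>T. mu p (c \<tau>))"
    unfolding T(4) by (rule ext, rule additive_sum, rule mu_addr)
  have hd: "hom_deg G laP PG (*) AG \<tau> (\<lambda>p. mu p (c \<tau>))" if "\<tau> \<in> T" for \<tau>
  proof -
    have t: "\<tau> \<in> carrier G" "c \<tau> \<in> QG \<tau>" using that T(2,3) by auto
    show ?thesis unfolding hom_deg_def using t mu_grad[OF _ t(1) _ t(2)] by (simp add: mu_addl mu_lin)
  qed
  show ?thesis unfolding e
    by (rule HOM_sum[OF grp grA lmod_times T(1)], rule HOM_single, erule hd)
qed

lemma mu_MM: "(\<lambda>p. mu p q) \<in> MM"
proof -
  obtain ws where ws: "q = (\<Sum>(b, q')\<leftarrow>ws. laQ b q')" using lunQ unfolding lunital_def by blast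
  have "(\<lambda>p. mu p (\<Sum>(b, q')\<leftarrow>ws. laQ b q')) \<in> MM"
  proof (induction ws)
    case Nil
    have "mu p 0 = 0" for p using additive_zero[of "mu p"] mu_addr by blast
    then show ?case by (simp add: Bdot_zero)
  next
    case (Cons w ws)
    obtain b q' where w: "w = (b, q')" by fastforce
    have e: "(\<lambda>p. mu p (\<Sum>(b, q')\<leftarrow>w # ws. laQ b q')) = (\<lambda>p. (\<lambda>p. mu p q') (raP p b) + mu p (\<Sum>(b, q')\<leftarrow>ws. laQ b q'))"
      by (simp add: w mu_addr mu_bal)
    show ?case unfolding e by (rule Bdot_add[OF Bdot_elem[OF mu_HA] Cons.IH])
  qed
  then show ?thesis using ws by simp
qed

lemma HA_HU: assumes "h \<in> HA" shows "(\<lambda>p. laU (h p) u) \<in> HU"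
proof -
  from assms obtain S hh where S: "finite S" "S \<subseteq> carrier G" "\<forall>\<sigma>\<in>S. hom_deg G laP PG (*) AG \<sigma> (hh \<sigma>)"
    "h = (\<lambda>x. \<Sum>\<sigma>\<in>S. hh \<sigma> x)" unfolding HOM_def by auto
  obtain T c where T: "finite T" "T \<subseteq> carrier G" "\<forall>\<tau>\<in>T. c \<tau> \<in> UG \<tau>" "u = (\<Sum>\<tau>\<in>T. c \<tau>)"
    using gg_decomp[OF grU, of u] by metis
  have e: "(\<lambda>p. laU (h p) u) = (\<lambda>p. \<Sum>\<sigma>\<in>S. (\<lambda>p. \<Sum>\<tau>\<in>T. laU (hh \<sigma> p) (c \<tau>)) p)"
  proof
    fix p
    have "laU (h p) u = (\<Sum>\<sigma>\<in>S. laU (hh \<sigma> p) u)"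
      unfolding S(4) by (rule additive_sum[where f="\<lambda>a. laU a u"], rule laU_addl)
    also have "\<dots> = (\<Sum>\<sigma>\<in>S. \<Sum>\<tau>\<in>T. laU (hh \<sigma> p) (c \<tau>))"
      unfolding T(4) by (rule sum.cong[OF refl], rule additive_sum, rule laU_addr)
    finally show "laU (h p) u = (\<Sum>\<sigma>\<in>S. (\<lambda>p. \<Sum>\<tau>\<in>T. laU (hh \<sigma> p) (c \<tau>)) p)" by simp
  qed
  have hd: "hom_deg G laP PG laU UG (\<sigma> \<otimes>\<^bsub>G\<^esub> \<tau>) (\<lambda>p. laU (hh \<sigma> p) (c \<tau>))" if "\<sigma> \<in> S" "\<tau> \<in> T" for \<sigma> \<tau>
  proof -
    have s: "\<sigma> \<in> carrier G" "\<tau> \<in> carrier G" using that S(2) T(2) by auto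
    have h: "hom_deg G laP PG (*) AG \<sigma> (hh \<sigma>)" using S(3) that by auto
    show ?thesis unfolding hom_deg_def
    proof (intro conjI allI ballI)
      show "\<sigma> \<otimes>\<^bsub>G\<^esub> \<tau> \<in> carrier G" by (rule mclosed[OF s])
      show "laU (hh \<sigma> (x + y)) (c \<tau>) = laU (hh \<sigma> x) (c \<tau>) + laU (hh \<sigma> y) (c \<tau>)" for x y
        using h by (simp add: hom_deg_def laU_addl)
      show "laU (hh \<sigma> (laP a x)) (c \<tau>) = laU a (laU (hh \<sigma> x) (c \<tau>))" for a x
        using h by (simp add: hom_deg_def laU_mult)
      fix \<rho> x assume r: "\<rho> \<in> carrier G" "x \<in> PG \<rho>"
      have "hh \<sigma> x \<in> AG (\<rho> \<otimes>\<^bsub>G\<^esub> \<sigma>)" using h r by (simp add: hom_deg_def)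
      then have "laU (hh \<sigma> x) (c \<tau>) \<in> UG (\<rho> \<otimes>\<^bsub>G\<^esub> \<sigma> \<otimes>\<^bsub>G\<^esub> \<tau>)"
        using gradU[OF mclosed[OF r(1) s(1)] s(2)] T(3) that by blast
      then show "laU (hh \<sigma> x) (c \<tau>) \<in> UG (\<rho> \<otimes>\<^bsub>G\<^esub> (\<sigma> \<otimes>\<^bsub>G\<^esub> \<tau>))"
        using massoc[OF r(1) s] by simp
    qed
  qed
  show ?thesis unfolding e
    by (rule HOM_sum[OF grp grU lmodU S(1)], rule HOM_sum[OF grp grU lmodU T(1)], rule HOM_single, rule hd)
qed

end


context mctx begin

lemma eta_add: "eta laU (x + y) = (\<lambda>p. eta laU x p + eta laU y p)"
proof
  fix p
  show "eta laU (x + y) p = eta laU x p + eta laU y p"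
    unfolding eta_def using sum_keys_add[of "\<lambda>k n. zmult n (laU (fst k p) (snd k))" x y, OF zmult_add] by simp
qed

lemma eta_single: "eta laU (Poly_Mapping.single k n) = (\<lambda>p. zmult n (laU (fst k p) (snd k)))"
proof
  fix p
  show "eta laU (Poly_Mapping.single k n) p = zmult n (laU (fst k p) (snd k))"
    unfolding eta_def using sum_keys_single[of "\<lambda>k n. zmult n (laU (fst k p) (snd k))" k n, OF zmult_add] by simp
qed

lemma eta_zero: "eta laU 0 = (\<lambda>p. 0)" by (simp add: eta_def)

lemma eta_neg: "eta laU (- x) = (\<lambda>p. - eta laU x p)"
proof
  fix p
  have "eta laU x p + eta laU (-x) p = eta laU 0 p" using fun_cong[OF eta_add[of x "-x"], of p] by simp
  then have "eta laU x p + eta laU (-x) p = 0" by (simp add: eta_zero)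
  then show "eta laU (- x) p = - eta laU x p" by (simp add: eq_neg_iff_add_eq_0 add.commute)
qed

lemma eta_diff: "eta laU (x - y) = (\<lambda>p. eta laU x p - eta laU y p)"
  using eta_add[of x "-y"] eta_neg[of y] by simp

lemma eta_sum: "eta laU (\<Sum>i\<in>I. f i) p = (\<Sum>i\<in>I. eta laU (f i) p)"
  by (rule additive_sum[where f="\<lambda>x. eta laU x p"]) (simp add: eta_add)

lemma Bact_add: "tensor_Bact raP b (x + y) = tensor_Bact raP b x + tensor_Bact raP b y"
  unfolding tensor_Bact_def
  using sum_keys_add[of "\<lambda>k n. Poly_Mapping.single (\<lambda>p. fst k (raP p b), snd k) n" x y, OF single_add] by simp

lemma Bact_single: "tensor_Bact raP b (Poly_Mapping.single k n) = Poly_Mapping.single (\<lambda>p. fst k (raP p b), snd k) n"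
  unfolding tensor_Bact_def
  using sum_keys_single[of "\<lambda>k n. Poly_Mapping.single (\<lambda>p. fst k (raP p b), snd k) n" k n, OF single_add] by simp

lemma Bact_zero: "tensor_Bact raP b 0 = 0" by (simp add: tensor_Bact_def)

lemma Bact_neg: "tensor_Bact raP b (- x) = - tensor_Bact raP b x"
  by (rule additive_neg[where f="tensor_Bact raP b"]) (rule Bact_add)

lemma Bact_diff: "tensor_Bact raP b (x - y) = tensor_Bact raP b x - tensor_Bact raP b y"
  by (rule additive_diff[where f="tensor_Bact raP b"]) (rule Bact_add)

lemma eta_rel: "x \<in> RR \<Longrightarrow> eta laU x = (\<lambda>p. 0)"
  by (induction rule: tensor_rel.induct)
     (simp_all add: eta_zero eta_add eta_neg eta_diff eta_single laU_addl laU_addr laU_mult)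

lemma Bact_free: assumes "x \<in> tensor_free MM" shows "tensor_Bact raP b x \<in> tensor_free MM"
proof -
  have "Poly_Mapping.keys (tensor_Bact raP b x) \<subseteq> (\<Union>k\<in>Poly_Mapping.keys x. Poly_Mapping.keys (Poly_Mapping.single (\<lambda>p. fst k (raP p b), snd k) (Poly_Mapping.lookup x k)))"
    unfolding tensor_Bact_def by (rule keys_sum)
  also have "\<dots> \<subseteq> MM \<times> UNIV"
  proof
    fix k' assume "k' \<in> (\<Union>k\<in>Poly_Mapping.keys x. Poly_Mapping.keys (Poly_Mapping.single (\<lambda>p. fst k (raP p b), snd k) (Poly_Mapping.lookup x k)))"
    then obtain k where k: "k \<in> Poly_Mapping.keys x" "k' = (\<lambda>p. fst k (raP p b), snd k)"
      by (auto split: if_splits)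
    then have "fst k \<in> MM" using assms by (auto simp: tensor_free_def)
    then show "k' \<in> MM \<times> UNIV" using k(2) MM_shift by auto
  qed
  finally show ?thesis by (simp add: tensor_free_def)
qed

lemma Bact_rel: "x \<in> RR \<Longrightarrow> tensor_Bact raP b x \<in> RR"
proof (induction rule: tensor_rel.induct)
  case zero then show ?case by (simp add: Bact_zero tensor_rel.zero)
next
  case (add x y) then show ?case by (simp add: Bact_add tensor_rel.add)
next
  case (neg x) then show ?case by (simp add: Bact_neg tensor_rel.neg)
next
  case (addl g g' u)
  show ?case by (simp add: Bact_diff Bact_single) (rule tensor_rel.addl[OF MM_shift[OF addl(1)] MM_shift[OF addl(2)]])
next
  case (addr g u u')
  show ?case by (simp add: Bact_diff Bact_single) (rule tensor_rel.addr[OF MM_shift[OF addr(1)]])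
next
  case (bal g a u)
  show ?case by (simp add: Bact_diff Bact_single) (rule tensor_rel.bal[OF MM_shift[OF bal(1)]])
qed

lemma eta_Bact: "eta laU (tensor_Bact raP b x) = (\<lambda>p. eta laU x (raP p b))"
proof
  fix p
  show "eta laU (tensor_Bact raP b x) p = eta laU x (raP p b)"
    unfolding tensor_Bact_def eta_sum by (simp add: eta_single) (simp add: eta_def)
qed

end


context mctx begin

lemma eta_img_sub: assumes "x \<in> tensor_free MM" shows "eta laU x \<in> NN"
proof -
  have t: "(\<lambda>p. zmult (Poly_Mapping.lookup x k) (laU (fst k p) (snd k))) \<in> NN" if "k \<in> Poly_Mapping.keys x" for k
  proof -
    have "fst k \<in> MM" using that assms by (auto simp: tensor_free_def)
    moreover have "\<And>h. h \<in> HA \<Longrightarrow> (\<lambda>p. laU (h p) (snd k)) \<in> HU" by (rule HA_HU)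
    ultimately have "(\<lambda>p. laU (fst k p) (snd k)) \<in> NN"
      using Bdot_map[where \<phi>="\<lambda>a. laU a (snd k)" and H=HA and H'=HU and raP=raP, OF laU_addl] by blast
    moreover have "\<And>h. h \<in> HU \<Longrightarrow> (\<lambda>p. zmult (Poly_Mapping.lookup x k) (h p)) \<in> HU"
      by (rule HOM_zmult[OF grp grU lmodU])
    ultimately show ?thesis
      using Bdot_map[where \<phi>="zmult (Poly_Mapping.lookup x k)" and H=HU and H'=HU and raP=raP, OF zmult_add_right] by blast
  qed
  have "eta laU x = (\<lambda>p. \<Sum>k\<in>Poly_Mapping.keys x. (\<lambda>p. zmult (Poly_Mapping.lookup x k) (laU (fst k p) (snd k))) p)"
    by (simp add: eta_def)
  also have "\<dots> \<in> NN" by (rule Bdot_sum[OF finite_keys t])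
  finally show ?thesis .
qed

lemma Img_zero: "(\<lambda>p. 0) \<in> eta laU ` tensor_free MM"
  by (rule image_eqI[of _ _ 0]) (simp_all add: eta_zero tensor_free_def)

lemma Img_add: assumes "f \<in> eta laU ` tensor_free MM" "g \<in> eta laU ` tensor_free MM"
  shows "(\<lambda>p. f p + g p) \<in> eta laU ` tensor_free MM"
proof -
  obtain x y where xy: "x \<in> tensor_free MM" "y \<in> tensor_free MM" "f = eta laU x" "g = eta laU y"
    using assms by auto
  have "x + y \<in> tensor_free MM" using xy(1,2) keys_add[of x y] by (auto simp: tensor_free_def)
  then show ?thesis using xy(3,4) eta_add[of x y] by (metis image_eqI)
qed

lemma single_img: "(\<lambda>p. laU (mu p q) w) \<in> eta laU ` tensor_free MM"
proof (rule image_eqI[of _ _ "Poly_Mapping.single ((\<lambda>p. mu p q), w) 1"])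
  show "(\<lambda>p. laU (mu p q) w) = eta laU (Poly_Mapping.single (\<lambda>p. mu p q, w) 1)"
    by (simp add: eta_single)
  show "Poly_Mapping.single (\<lambda>p. mu p q, w) 1 \<in> tensor_free MM"
    using mu_MM by (simp add: tensor_free_def)
qed

lemma term_img: assumes "k \<in> HU" shows "(\<lambda>p. k (raP p b)) \<in> eta laU ` tensor_free MM"
proof -
  obtain zs where zs: "b = (\<Sum>(q, p')\<leftarrow>zs. nu q p')" using snu unfolding pairing_surj_def by blast
  have k0: "k 0 = 0" using additive_zero[of k] HOM_additive[OF assms] by blast
  have "(\<lambda>p. k (raP p (\<Sum>(q, p')\<leftarrow>zs. nu q p'))) \<in> eta laU ` tensor_free MM"
  proof (induction zs)
    case Nil then show ?case by (simp add: raP_0 k0 Img_zero)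
  next
    case (Cons z zs)
    obtain q p' where z: "z = (q, p')" by fastforce
    have e: "(\<lambda>p. k (raP p (\<Sum>(q, p')\<leftarrow>z # zs. nu q p'))) = (\<lambda>p. (\<lambda>p. laU (mu p q) (k p')) p + (\<lambda>p. k (raP p (\<Sum>(q, p')\<leftarrow>zs. nu q p'))) p)"
      by (simp add: z raP_addr HOM_additive[OF assms] mor HOM_linear[OF lmodU assms])
    show ?case unfolding e by (rule Img_add[OF single_img Cons.IH])
  qed
  then show ?thesis using zs by simp
qed

lemma NN_img: assumes "f \<in> NN" shows "f \<in> eta laU ` tensor_free MM"
proof -
  obtain xs where xs: "set (map snd xs) \<subseteq> HU" "f = (\<lambda>p. \<Sum>(b, h)\<leftarrow>xs. h (raP p b))"
    using assms unfolding Bdot_def by auto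
  have "set (map snd xs) \<subseteq> HU \<Longrightarrow> (\<lambda>p. \<Sum>(b, h)\<leftarrow>xs. h (raP p b)) \<in> eta laU ` tensor_free MM"
  proof (induction xs)
    case Nil then show ?case by (simp add: Img_zero)
  next
    case (Cons z xs)
    obtain b h where z: "z = (b, h)" by fastforce
    have h: "h \<in> HU" using Cons.prems z by auto
    have e: "(\<lambda>p. \<Sum>(b, h)\<leftarrow>z # xs. h (raP p b)) = (\<lambda>p. (\<lambda>p. h (raP p b)) p + (\<lambda>p. \<Sum>(b, h)\<leftarrow>xs. h (raP p b)) p)"
      by (simp add: z)
    show ?case unfolding e by (rule Img_add[OF term_img[OF h] Cons.IH]) (use Cons.prems in auto)
  qed
  then show ?thesis using xs by simp
qed

lemma eta_img: "eta laU ` tensor_free MM = NN"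
  using eta_img_sub NN_img by blast

lemma eta_grad:
  assumes r: "\<rho> \<in> carrier G" and x: "x \<in> tensor_free MM"
    and kx: "\<forall>k\<in>Poly_Mapping.keys x. \<exists>\<sigma>\<in>carrier G. \<exists>\<tau>\<in>carrier G. \<sigma> \<otimes>\<^bsub>G\<^esub> \<tau> = \<rho> \<and>
              hom_deg G laP PG (*) AG \<sigma> (fst k) \<and> snd k \<in> UG \<tau>"
  shows "hom_deg G laP PG laU UG \<rho> (eta laU x)"
proof -
  have km: "fst k \<in> MM" if "k \<in> Poly_Mapping.keys x" for k using that x by (auto simp: tensor_free_def)
  show ?thesis unfolding hom_deg_def
  proof (intro conjI allI ballI)
    show "\<rho> \<in> carrier G" by (rule r)
    show "eta laU x (p + p') = eta laU x p + eta laU x p'" for p p'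
      unfolding eta_def by (simp add: sum.distrib[symmetric] MM_additive km laU_addl zmult_add_right cong: sum.cong)
    show "eta laU x (laP a p) = laU a (eta laU x p)" for a p
      unfolding eta_def additive_sum[of "laU a", OF laU_addr] zmult_hom[of "laU a", OF laU_addr]
      by (simp add: MM_linear km laU_mult cong: sum.cong)
    fix \<tau>' p assume tp: "\<tau>' \<in> carrier G" "p \<in> PG \<tau>'"
    have sg: "add_subgroup (UG (\<tau>' \<otimes>\<^bsub>G\<^esub> \<rho>))" by (rule gg_sub[OF grU mclosed[OF tp(1) r]])
    show "eta laU x p \<in> UG (\<tau>' \<otimes>\<^bsub>G\<^esub> \<rho>)"
      unfolding eta_def
    proof (rule subgroup_sum[OF sg], rule zmult_subgroup[OF sg])
      fix k assume k: "k \<in> Poly_Mapping.keys x"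
      then obtain \<sigma> \<tau> where st: "\<sigma> \<in> carrier G" "\<tau> \<in> carrier G" "\<sigma> \<otimes>\<^bsub>G\<^esub> \<tau> = \<rho>"
        "hom_deg G laP PG (*) AG \<sigma> (fst k)" "snd k \<in> UG \<tau>" using kx by blast
      have "fst k p \<in> AG (\<tau>' \<otimes>\<^bsub>G\<^esub> \<sigma>)" using st(4) tp by (simp add: hom_deg_def)
      then have "laU (fst k p) (snd k) \<in> UG (\<tau>' \<otimes>\<^bsub>G\<^esub> \<sigma> \<otimes>\<^bsub>G\<^esub> \<tau>)"
        by (rule gradU[OF mclosed[OF tp(1) st(1)] st(2) _ st(5)])
      then show "laU (fst k p) (snd k) \<in> UG (\<tau>' \<otimes>\<^bsub>G\<^esub> \<rho>)"
        using massoc[OF tp(1) st(1,2)] st(3) by simp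
    qed
  qed
qed

end


context mctx begin

lemma RR_diff: "x \<in> RR \<Longrightarrow> y \<in> RR \<Longrightarrow> x - y \<in> RR"
  using tensor_rel.add[OF _ tensor_rel.neg, of x MM laU y] by simp

lemma RR_sum: "(\<And>i. i \<in> I \<Longrightarrow> f i \<in> RR) \<Longrightarrow> sum f I \<in> RR"
proof (cases "finite I")
  case True
  assume "\<And>i. i \<in> I \<Longrightarrow> f i \<in> RR"
  with True show ?thesis
    by (induction I rule: finite_induct) (simp_all add: tensor_rel.zero tensor_rel.add)
qed (simp add: tensor_rel.zero)

lemma RR_scale:
  fixes f :: "int \<Rightarrow> _"
  assumes add: "\<And>m n. f (m + n) = f m + f n" and one: "f 1 \<in> RR"
  shows "f n \<in> RR"
proof (induction n rule: int_induct[where k=0])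
  case base then show ?case using additive_zero[of f, OF add] by (simp add: tensor_rel.zero)
next
  case (step1 i) then show ?case by (simp add: add tensor_rel.add one)
next
  case (step2 i)
  have "f i = f (i - 1) + f 1" using add[of "i-1" 1] by simp
  then have "f (i - 1) = f i - f 1" by simp
  then show ?case using RR_diff[OF step2(2) one] by simp
qed

lemma rel_single0: "g \<in> MM \<Longrightarrow> Poly_Mapping.single (g, 0) (1::int) \<in> RR"
  using tensor_rel.neg[OF tensor_rel.addr[of g MM 0 0 laU]] by simp

lemma rel_zero_fun: "Poly_Mapping.single ((\<lambda>p. 0), u) (1::int) \<in> RR"
proof -
  have "Poly_Mapping.single ((\<lambda>p. (0::'a) + 0), u) (1::int) - Poly_Mapping.single ((\<lambda>p. 0), u) 1 - Poly_Mapping.single ((\<lambda>p. 0), u) 1 \<in> RR"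
    by (rule tensor_rel.addl; rule Bdot_zero)
  then have "- (Poly_Mapping.single ((\<lambda>p. (0::'a) + 0), u) (1::int) - Poly_Mapping.single ((\<lambda>p. 0), u) 1 - Poly_Mapping.single ((\<lambda>p. 0), u) 1) \<in> RR"
    by (rule tensor_rel.neg)
  then show ?thesis by simp
qed

lemma rel_zmult:
  assumes g: "g \<in> MM"
  shows "Poly_Mapping.single (g, zmult n w) (1::int) - Poly_Mapping.single (g, w) n \<in> RR"
proof -
  define D where "D i = Poly_Mapping.single (g, zmult i w) (1::int) - Poly_Mapping.single (g, w) i" for i
  define A where "A i = Poly_Mapping.single (g, zmult i w + w) (1::int) - Poly_Mapping.single (g, zmult i w) (1::int) - Poly_Mapping.single (g, w) (1::int)" for i
  have A: "A i \<in> RR" for i unfolding A_def by (rule tensor_rel.addr[OF g])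
  have Ds: "D (j + 1) = A j + D j" for j
    unfolding D_def A_def zmult_plus1 single_add by (simp add: algebra_simps)
  have "D n \<in> RR"
  proof (induction n rule: int_induct[where k=0])
    case base then show ?case by (simp add: D_def rel_single0[OF g])
  next
    case (step1 i) then show ?case by (simp add: Ds A tensor_rel.add)
  next
    case (step2 i)
    have "D i = A (i - 1) + D (i - 1)" using Ds[of "i - 1"] by simp
    then have "D (i - 1) = D i - A (i - 1)" by (simp add: algebra_simps)
    then show ?case using RR_diff[OF step2(2) A] by simp
  qed
  then show ?thesis by (simp add: D_def)
qed

lemma rel_sum_right:
  assumes g: "g \<in> MM" and K: "finite K"
  shows "(\<Sum>k\<in>K. Poly_Mapping.single (g, w k) (1::int)) - Poly_Mapping.single (g, \<Sum>k\<in>K. w k) (1::int) \<in> RR"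
  using K
proof (induction K rule: finite_induct)
  case empty then show ?case using tensor_rel.neg[OF rel_single0[OF g]] by simp
next
  case (insert a K)
  let ?S = "\<Sum>k\<in>K. Poly_Mapping.single (g, w k) (1::int)"
  let ?W = "\<Sum>k\<in>K. w k"
  have a: "Poly_Mapping.single (g, w a + ?W) (1::int) - Poly_Mapping.single (g, w a) (1::int) - Poly_Mapping.single (g, ?W) (1::int) \<in> RR"
    by (rule tensor_rel.addr[OF g])
  have "(\<Sum>k\<in>insert a K. Poly_Mapping.single (g, w k) (1::int)) - Poly_Mapping.single (g, \<Sum>k\<in>insert a K. w k) (1::int)
      = (?S - Poly_Mapping.single (g, ?W) (1::int)) - (Poly_Mapping.single (g, w a + ?W) (1::int) - Poly_Mapping.single (g, w a) (1::int) - Poly_Mapping.single (g, ?W) (1::int))"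
    using insert(1,2) by (simp add: algebra_simps)
  then show ?case using RR_diff[OF insert(3) a] by simp
qed

lemma MM_zero: "g \<in> MM \<Longrightarrow> g 0 = 0"
  using additive_zero[of g] MM_additive by blast

lemma Bact_addb:
  assumes x: "x \<in> tensor_free MM"
  shows "tensor_Bact raP (b1 + b2) x - tensor_Bact raP b1 x - tensor_Bact raP b2 x \<in> RR"
proof -
  have km: "fst k \<in> MM" if "k \<in> Poly_Mapping.keys x" for k using that x by (auto simp: tensor_free_def)
  let ?F = "\<lambda>b k n. Poly_Mapping.single (\<lambda>p. fst k (raP p b), snd k) n"
  have e: "tensor_Bact raP (b1 + b2) x - tensor_Bact raP b1 x - tensor_Bact raP b2 x =
    (\<Sum>k\<in>Poly_Mapping.keys x. ?F (b1 + b2) k (Poly_Mapping.lookup x k) - ?F b1 k (Poly_Mapping.lookup x k) - ?F b2 k (Poly_Mapping.lookup x k))"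
    unfolding tensor_Bact_def by (simp add: sum_subtractf)
  show ?thesis unfolding e
  proof (rule RR_sum)
    fix k assume k: "k \<in> Poly_Mapping.keys x"
    have ad: "?F (b1 + b2) k (m + n) - ?F b1 k (m + n) - ?F b2 k (m + n) =
       (?F (b1 + b2) k m - ?F b1 k m - ?F b2 k m) + (?F (b1 + b2) k n - ?F b1 k n - ?F b2 k n)" for m n :: int
      by (simp add: single_add algebra_simps)
    have fk: "(\<lambda>p. fst k (raP p (b1 + b2))) = (\<lambda>p. (\<lambda>p. fst k (raP p b1)) p + (\<lambda>p. fst k (raP p b2)) p)"
      by (simp add: raP_addr MM_additive[OF km[OF k]])
    have "?F (b1 + b2) k 1 - ?F b1 k 1 - ?F b2 k 1 \<in> RR"
      unfolding fk by (rule tensor_rel.addl[OF MM_shift[OF km[OF k]] MM_shift[OF km[OF k]]])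
    then show "?F (b1 + b2) k (Poly_Mapping.lookup x k) - ?F b1 k (Poly_Mapping.lookup x k) - ?F b2 k (Poly_Mapping.lookup x k) \<in> RR"
      using RR_scale[where f="\<lambda>n. ?F (b1 + b2) k n - ?F b1 k n - ?F b2 k n", OF ad] by blast
  qed
qed

lemma Bact_0b:
  assumes x: "x \<in> tensor_free MM"
  shows "tensor_Bact raP 0 x \<in> RR"
  unfolding tensor_Bact_def
proof (rule RR_sum)
  fix k assume k: "k \<in> Poly_Mapping.keys x"
  have "fst k \<in> MM" using k x by (auto simp: tensor_free_def)
  then have e: "(\<lambda>p. fst k (raP p 0)) = (\<lambda>p. 0)" by (simp add: raP_0 MM_zero)
  show "Poly_Mapping.single (\<lambda>p. fst k (raP p 0), snd k) (Poly_Mapping.lookup x k) \<in> RR"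
    unfolding e by (rule RR_scale[OF single_add rel_zero_fun])
qed

lemma Bact_nu:
  assumes x: "x \<in> tensor_free MM" and ex: "eta laU x = (\<lambda>p. 0)"
  shows "tensor_Bact raP (nu q p') x \<in> RR"
proof -
  have km: "fst k \<in> MM" if "k \<in> Poly_Mapping.keys x" for k using that x by (auto simp: tensor_free_def)
  define g0 where "g0 = (\<lambda>p. mu p q)"
  have g0: "g0 \<in> MM" unfolding g0_def by (rule mu_MM)
  define w where "w k = zmult (Poly_Mapping.lookup x k) (laU (fst k p') (snd k))" for k
  define Aa where "Aa k = Poly_Mapping.single (\<lambda>p. fst k (raP p (nu q p')), snd k) (Poly_Mapping.lookup x k)" for k
  define Bb where "Bb k = Poly_Mapping.single (g0, w k) (1::int)" for k
  have T1: "(\<Sum>k\<in>Poly_Mapping.keys x. Aa k - Bb k) \<in> RR"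
  proof (rule RR_sum)
    fix k assume k: "k \<in> Poly_Mapping.keys x"
    have fk: "(\<lambda>p. fst k (raP p (nu q p'))) = (\<lambda>p. g0 p * fst k p')"
      by (simp add: mor MM_linear[OF km[OF k]] g0_def)
    have ad: "Poly_Mapping.single (\<lambda>p. g0 p * fst k p', snd k) (m + n) - Poly_Mapping.single (g0, laU (fst k p') (snd k)) (m + n)
       = (Poly_Mapping.single (\<lambda>p. g0 p * fst k p', snd k) m - Poly_Mapping.single (g0, laU (fst k p') (snd k)) m)
       + (Poly_Mapping.single (\<lambda>p. g0 p * fst k p', snd k) n - Poly_Mapping.single (g0, laU (fst k p') (snd k)) n)" for m n :: int
      by (simp add: single_add algebra_simps)
    have r1: "Poly_Mapping.single (\<lambda>p. g0 p * fst k p', snd k) (Poly_Mapping.lookup x k) - Poly_Mapping.single (g0, laU (fst k p') (snd k)) (Poly_Mapping.lookup x k) \<in> RR"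
      using RR_scale[where f="\<lambda>n. Poly_Mapping.single (\<lambda>p. g0 p * fst k p', snd k) n - Poly_Mapping.single (g0, laU (fst k p') (snd k)) n", OF ad tensor_rel.bal[OF g0]]
      by blast
    have r2: "Poly_Mapping.single (g0, laU (fst k p') (snd k)) (Poly_Mapping.lookup x k) - Bb k \<in> RR"
      using tensor_rel.neg[OF rel_zmult[OF g0, of "Poly_Mapping.lookup x k" "laU (fst k p') (snd k)"]]
      by (simp add: Bb_def w_def)
    have "Aa k - Bb k = (Poly_Mapping.single (\<lambda>p. g0 p * fst k p', snd k) (Poly_Mapping.lookup x k) - Poly_Mapping.single (g0, laU (fst k p') (snd k)) (Poly_Mapping.lookup x k))
        + (Poly_Mapping.single (g0, laU (fst k p') (snd k)) (Poly_Mapping.lookup x k) - Bb k)"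
      by (simp add: Aa_def fk)
    then show "Aa k - Bb k \<in> RR" using tensor_rel.add[OF r1 r2] by simp
  qed
  have T2: "(\<Sum>k\<in>Poly_Mapping.keys x. Bb k) - Poly_Mapping.single (g0, \<Sum>k\<in>Poly_Mapping.keys x. w k) (1::int) \<in> RR"
    unfolding Bb_def by (rule rel_sum_right[OF g0 finite_keys])
  have W: "(\<Sum>k\<in>Poly_Mapping.keys x. w k) = 0"
    using fun_cong[OF ex, of p'] by (simp add: w_def eta_def)
  have T3: "Poly_Mapping.single (g0, \<Sum>k\<in>Poly_Mapping.keys x. w k) (1::int) \<in> RR"
    unfolding W by (rule rel_single0[OF g0])
  have "tensor_Bact raP (nu q p') x = (\<Sum>k\<in>Poly_Mapping.keys x. Aa k - Bb k)
     + ((\<Sum>k\<in>Poly_Mapping.keys x. Bb k) - Poly_Mapping.single (g0, \<Sum>k\<in>Poly_Mapping.keys x. w k) (1::int))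
     + Poly_Mapping.single (g0, \<Sum>k\<in>Poly_Mapping.keys x. w k) (1::int)"
    by (simp add: tensor_Bact_def Aa_def sum_subtractf)
  then show ?thesis using tensor_rel.add[OF tensor_rel.add[OF T1 T2] T3] by simp
qed

lemma torsion:
  assumes x: "x \<in> tensor_free MM" and ex: "eta laU x = (\<lambda>p. 0)"
  shows "tensor_Bact raP b x \<in> RR"
proof -
  obtain zs where zs: "b = (\<Sum>(q, p')\<leftarrow>zs. nu q p')" using snu unfolding pairing_surj_def by blast
  have "tensor_Bact raP (\<Sum>(q, p')\<leftarrow>zs. nu q p') x \<in> RR"
  proof (induction zs)
    case Nil then show ?case using Bact_0b[OF x] by simp
  next
    case (Cons z zs)
    obtain q p' where z: "z = (q, p')" by fastforce
    let ?r = "\<Sum>(q, p')\<leftarrow>zs. nu q p'"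
    have e1: "tensor_Bact raP (\<Sum>(q, p')\<leftarrow>z # zs. nu q p') x = tensor_Bact raP (nu q p' + ?r) x"
      by (simp add: z)
    have e2: "tensor_Bact raP (nu q p' + ?r) x =
      (tensor_Bact raP (nu q p' + ?r) x - tensor_Bact raP (nu q p') x - tensor_Bact raP ?r x)
      + tensor_Bact raP (nu q p') x + tensor_Bact raP ?r x"
      by simp
    show ?case unfolding e1
      by (subst e2, rule tensor_rel.add[OF tensor_rel.add[OF Bact_addb[OF x, of "nu q p'" ?r] Bact_nu[OF x ex, of q p']] Cons.IH])
  qed
  then show ?thesis using zs by simp
qed

end

theorem lemma5p4:
  fixes G :: "('g, 'z) monoid_scheme"
    and AG :: "'g \<Rightarrow> 'a::ring set" and BG :: "'g \<Rightarrow> 'b::ring set"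
    and PG :: "'g \<Rightarrow> 'p::ab_group_add set" and laP :: "'a \<Rightarrow> 'p \<Rightarrow> 'p" and raP :: "'p \<Rightarrow> 'b \<Rightarrow> 'p"
    and QG :: "'g \<Rightarrow> 'q::ab_group_add set" and laQ :: "'b \<Rightarrow> 'q \<Rightarrow> 'q" and raQ :: "'q \<Rightarrow> 'a \<Rightarrow> 'q"
    and mu :: "'p \<Rightarrow> 'q \<Rightarrow> 'a" and nu :: "'q \<Rightarrow> 'p \<Rightarrow> 'b"
    and UG :: "'g \<Rightarrow> 'u::ab_group_add set" and laU :: "'a \<Rightarrow> 'u \<Rightarrow> 'u"
  assumes "group G"
    and "graded_morita_context G AG BG PG laP raP QG laQ raQ mu nu"
    and "pairing_surj mu" and "pairing_surj nu"
    and "graded_lmod G AG UG laU" and "lunital laU"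
  defines "M \<equiv> Bdot raP (HOM G laP PG (*) AG)"
    and "N \<equiv> Bdot raP (HOM G laP PG laU UG)"
  shows "(\<forall>x\<in>tensor_rel M laU. eta laU x = (\<lambda>p. 0))
    \<and> (\<forall>x\<in>tensor_free M. \<forall>y\<in>tensor_free M. eta laU (x + y) = (\<lambda>p. eta laU x p + eta laU y p))
    \<and> (\<forall>b x::(('p \<Rightarrow> 'a) \<times> 'u) \<Rightarrow>\<^sub>0 int. x \<in> tensor_free M \<longrightarrow> tensor_Bact raP b x \<in> tensor_free M)
    \<and> (\<forall>b. \<forall>x\<in>tensor_rel M laU. tensor_Bact raP b x \<in> tensor_rel M laU)
    \<and> (\<forall>b. \<forall>x\<in>tensor_free M. eta laU (tensor_Bact raP b x) = (\<lambda>p. eta laU x (raP p b)))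
    \<and> eta laU ` tensor_free M = N
    \<and> (\<forall>\<rho>\<in>carrier G. \<forall>x\<in>tensor_free M.
         (\<forall>k\<in>Poly_Mapping.keys x. \<exists>\<sigma>\<in>carrier G. \<exists>\<tau>\<in>carrier G. \<sigma> \<otimes>\<^bsub>G\<^esub> \<tau> = \<rho> \<and>
              hom_deg G laP PG (*) AG \<sigma> (fst k) \<and> snd k \<in> UG \<tau>)
         \<longrightarrow> hom_deg G laP PG laU UG \<rho> (eta laU x))
    \<and> (\<forall>x\<in>tensor_free M. eta laU x = (\<lambda>p. 0) \<longrightarrow> (\<forall>b. tensor_Bact raP b x \<in> tensor_rel M laU))"
proof -
  interpret mctx G AG BG PG laP raP QG laQ raQ mu nu UG laU
    using assms(1-6) by (simp add: mctx_def)
  show ?thesis unfolding M_def N_def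
  proof (intro conjI)
    show "\<forall>x\<in>RR. eta laU x = (\<lambda>p. 0)" using eta_rel by blast
    show "\<forall>x\<in>tensor_free MM. \<forall>y\<in>tensor_free MM. eta laU (x + y) = (\<lambda>p. eta laU x p + eta laU y p)"
      using eta_add by blast
    show "\<forall>b x. x \<in> tensor_free MM \<longrightarrow> tensor_Bact raP b x \<in> tensor_free MM" using Bact_free by blast
    show "\<forall>b. \<forall>x\<in>RR. tensor_Bact raP b x \<in> RR" using Bact_rel by blast
    show "\<forall>b. \<forall>x\<in>tensor_free MM. eta laU (tensor_Bact raP b x) = (\<lambda>p. eta laU x (raP p b))"
      using eta_Bact by blast
    show "eta laU ` tensor_free MM = NN" by (rule eta_img)
    show "\<forall>\<rho>\<in>carrier G. \<forall>x\<in>tensor_free MM.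
         (\<forall>k\<in>Poly_Mapping.keys x. \<exists>\<sigma>\<in>carrier G. \<exists>\<tau>\<in>carrier G. \<sigma> \<otimes>\<^bsub>G\<^esub> \<tau> = \<rho> \<and>
              hom_deg G laP PG (*) AG \<sigma> (fst k) \<and> snd k \<in> UG \<tau>)
         \<longrightarrow> hom_deg G laP PG laU UG \<rho> (eta laU x)"
      using eta_grad by blast
    show "\<forall>x\<in>tensor_free MM. eta laU x = (\<lambda>p. 0) \<longrightarrow> (\<forall>b. tensor_Bact raP b x \<in> RR)"
      using torsion by blast
  qed
qed

end
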